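(* Let $\widetilde{C}(\boldsymbol{\theta},\varepsilon)$ denote a noisy cost function at noise level $\varepsilon$, and let $a_1>1$ be a boost factor with perfect access to the noise level $a_1\varepsilon$. Consider a Zero Noise Extrapolation estimator with two noise levels $$C_m(\boldsymbol{\theta})=\frac{A\,\widetilde{C}(\boldsymbol{\theta},\varepsilon)-B\,\widetilde{C}(\boldsymbol{\theta},a_1\varepsilon)}{D}+E,$$ with real constants $A,B,D,E$ independent of $\boldsymbol{\theta}$, $D\ne0$, and ratio $c=A/B$ equal to $a_1$ (Richardson extrapolation), $a_1r(\varepsilon)^{t(\varepsilon)}/r(a_1\varepsilon)^{t(a_1\varepsilon)}$ (exponential extrapolation, with $r,t$ the positive functions of the noise level in the exponential noise model), or $a_1^{-(L+1)}$ (NIBP extrapolation, $L$ being the circuit depth). Assume $C_m$ is estimated from independent estimates of the two noisy costs and that the variance of the boosted-noise estimate is never smaller than that of the base-noise estimate, so that the error mitigation cost satisfies $\gamma\ge(A^2+B^2)/D^2$. Let $\boldsymbol{\theta}_{\varepsilon*}$ be a global minimizer of $\widetilde{C}(\cdot,\varepsilon)$ over the accessible parameters, let $\langle\cdot\rangle_i$ denote the average over accessible parameter vectors $\boldsymbol{\theta}_i$, write $\Delta\widetilde{C}(\boldsymbol{\theta}_{i,\varepsilon*},x)=\widetilde{C}(\boldsymbol{\theta}_i,x)-\widetilde{C}(\boldsymbol{\theta}_{\varepsilon*},x)$, $\Delta C_m(\boldsymbol{\theta}_{i,\varepsilon*})=C_m(\boldsymbol{\theta}_i)-C_m(\boldsymbol{\theta}_{\varepsilon*})$,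 assume $\langle\Delta\widetilde{C}(\boldsymbol{\theta}_{i,\varepsilon*},\varepsilon)\rangle_i\neq0$, and set $$z=\frac{\langle\Delta\widetilde{C}(\boldsymbol{\theta}_{i,\varepsilon*},a_1\varepsilon)\rangle_i}{\langle\Delta\widetilde{C}(\boldsymbol{\theta}_{i,\varepsilon*},\varepsilon)\rangle_i}.$$ Then the average relative resolvability satisfies $$\overline{\chi}\le\frac{(z-c)^2}{c^2+1}.$$ Consequently, if $z\le1$ and $\langle\Delta\widetilde{C}(\boldsymbol{\theta}_{i,\varepsilon*},a_1\varepsilon)\rangle_i\ge0$, then $\overline{\chi}\le1$ for each of the three extrapolation strategies.
   Context: The average relative resolvability is $\overline{\chi}=\frac{1}{\gamma}\Big(\frac{\langle\Delta C_m(\boldsymbol{\theta}_{i,\varepsilon*})\rangle_i}{\langle\Delta\widetilde{C}(\boldsymbol{\theta}_{i,\varepsilon*},\varepsilon)\rangle_i}\Big)^2$, where $\gamma$ is the error mitigation cost, i.e. the ratio of the variance of the mitigated estimate to the variance of the unmitigated noisy estimate. *)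

theory Defs
  imports Complex_Main
begin

definition avg :: "'p set \<Rightarrow> ('p \<Rightarrow> real) \<Rightarrow> real" where
  "avg Th f = (\<Sum>th\<in>Th. f th) / real (card Th)"

definition zne_cost :: "real \<Rightarrow> real \<Rightarrow> real \<Rightarrow> real \<Rightarrow> ('p \<Rightarrow> real \<Rightarrow> real)
    \<Rightarrow> real \<Rightarrow> real \<Rightarrow> 'p \<Rightarrow> real" where
  "zne_cost A B D E Ct eps a1 th = (A * Ct th eps - B * Ct th (a1 * eps)) / D + E"

text \<open>Error mitigation cost: variance of the mitigated estimate (from independent
  estimates with variances v0 at eps, v1 at a1 eps) divided by the variance v0 of the
  unmitigated noisy estimate.\<close>
definition mitigation_cost :: "real \<Rightarrow> real \<Rightarrow> real \<Rightarrow> real \<Rightarrow> real \<Rightarrow> real" where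
  "mitigation_cost A B D v0 v1 = ((A / D)^2 * v0 + (B / D)^2 * v1) / v0"

definition avg_rel_resolvability ::
  "real \<Rightarrow> 'p set \<Rightarrow> ('p \<Rightarrow> real) \<Rightarrow> ('p \<Rightarrow> real) \<Rightarrow> 'p \<Rightarrow> real" where
  "avg_rel_resolvability gamma Th Cm Cn ths =
     (1 / gamma) * (avg Th (\<lambda>th. Cm th - Cm ths) / avg Th (\<lambda>th. Cn th - Cn ths))^2"

end

theory Submission
  imports Defs
begin

theorem proposition2:
  fixes Th :: "'p set" and Ct :: "'p \<Rightarrow> real \<Rightarrow> real" and ths :: 'p
    and eps a1 A B D E c v0 v1 :: real
    and r t :: "real \<Rightarrow> real" and L :: nat
  assumes fin: "finite Th" and ne: "Th \<noteq> {}"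
    and eps: "eps > 0" and a1: "a1 > 1"
    and D: "D \<noteq> 0" and B: "B \<noteq> 0" and c_def: "c = A / B"
    and r_pos: "\<forall>x>0. r x > 0" and t_pos: "\<forall>x>0. t x > 0"
    and strategy: "c = a1
        \<or> c = a1 * r eps powr t eps / r (a1 * eps) powr t (a1 * eps)
        \<or> c = a1 powr (- (real L + 1))"
    and v0: "v0 > 0" and v1: "v1 \<ge> v0"
    and ths_in: "ths \<in> Th" and ths_min: "\<forall>th\<in>Th. Ct ths eps \<le> Ct th eps"
    and nz: "avg Th (\<lambda>th. Ct th eps - Ct ths eps) \<noteq> 0"
  defines "z \<equiv> avg Th (\<lambda>th. Ct th (a1 * eps) - Ct ths (a1 * eps))
                / avg Th (\<lambda>th. Ct th eps - Ct ths eps)"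
    and "chi \<equiv> avg_rel_resolvability (mitigation_cost A B D v0 v1) Th
                 (zne_cost A B D E Ct eps a1) (\<lambda>th. Ct th eps) ths"
  shows "chi \<le> (z - c)^2 / (c^2 + 1)
    \<and> ((z \<le> 1 \<and> avg Th (\<lambda>th. Ct th (a1 * eps) - Ct ths (a1 * eps)) \<ge> 0) \<longrightarrow> chi \<le> 1)"
proof -
  define X where "X = avg Th (\<lambda>th. Ct th eps - Ct ths eps)"
  define Y where "Y = avg Th (\<lambda>th. Ct th (a1 * eps) - Ct ths (a1 * eps))"
  have cardpos: "real (card Th) > 0" using fin ne by (simp add: card_gt_0_iff)
  have X0: "X \<ge> 0" unfolding X_def avg_def
    using ths_min cardpos by (intro divide_nonneg_pos sum_nonneg) auto
  have Xp: "X > 0" using X0 nz X_def by auto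
  have avgm: "avg Th (\<lambda>th. zne_cost A B D E Ct eps a1 th - zne_cost A B D E Ct eps a1 ths)
     = (A * X - B * Y) / D"
  proof -
    have "(\<lambda>th. zne_cost A B D E Ct eps a1 th - zne_cost A B D E Ct eps a1 ths)
      = (\<lambda>th. (A * (Ct th eps - Ct ths eps) - B * (Ct th (a1 * eps) - Ct ths (a1 * eps))) / D)"
      by (rule ext) (simp add: zne_cost_def diff_divide_distrib add_divide_distrib algebra_simps)
    moreover have "(\<Sum>th\<in>Th. (A * (Ct th eps - Ct ths eps) - B * (Ct th (a1 * eps) - Ct ths (a1 * eps))) / D)
       = (A * (\<Sum>th\<in>Th. Ct th eps - Ct ths eps) - B * (\<Sum>th\<in>Th. Ct th (a1 * eps) - Ct ths (a1 * eps))) / D"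
      by (simp add: sum_divide_distrib[symmetric] sum_distrib_left[symmetric] sum_subtractf)
    ultimately show ?thesis unfolding X_def Y_def avg_def using cardpos D
      by (simp only:) (simp add: field_simps)
  qed
  have zdef: "z = Y / X" unfolding z_def X_def Y_def by simp
  have Aeq: "A = c * B" using c_def B by simp
  have ratio: "avg Th (\<lambda>th. zne_cost A B D E Ct eps a1 th - zne_cost A B D E Ct eps a1 ths) / X
     = B * (c - z) / D"
    unfolding avgm zdef using Xp D Aeq by (simp add: field_simps)
  define g where "g = mitigation_cost A B D v0 v1"
  have gge: "g \<ge> B^2 * (c^2 + 1) / D^2"
  proof -
    have "g = (A^2 * v0 + B^2 * v1) / (D^2 * v0)" unfolding g_def mitigation_cost_def
      using D v0 by (simp add: field_simps power2_eq_square)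
    moreover have "(A^2 * v0 + B^2 * v1) / (D^2 * v0) \<ge> (A^2 * v0 + B^2 * v0) / (D^2 * v0)"
      using v0 v1 D by (intro divide_right_mono add_left_mono mult_left_mono) auto
    moreover have "(A^2 * v0 + B^2 * v0) / (D^2 * v0) = B^2 * (c^2 + 1) / D^2"
      using v0 D unfolding Aeq by (simp add: field_simps power2_eq_square)
    ultimately show ?thesis by linarith
  qed
  have gpos: "B^2 * (c^2 + 1) / D^2 > 0" using B D by (intro divide_pos_pos mult_pos_pos) (auto simp: add_pos_nonneg add_nonneg_pos)
  have chi_eq: "chi = (B * (c - z) / D)^2 / g"
    unfolding chi_def g_def avg_rel_resolvability_def using ratio X_def by simp
  have part1: "chi \<le> (z - c)^2 / (c^2 + 1)"
  proof -
    have "chi \<le> (B * (c - z) / D)^2 / (B^2 * (c^2 + 1) / D^2)"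
      unfolding chi_eq
    proof (rule divide_left_mono)
      have "0 < g" using gge gpos by linarith
      then show "0 < g * (B^2 * (c^2 + 1) / D^2)" using gpos by (rule mult_pos_pos)
    qed (use gge in auto)
    also have "\<dots> = ((B^2 / D^2) * (z - c)^2) / ((B^2 / D^2) * (c^2 + 1))"
      by (simp add: power_divide power_mult_distrib power2_commute)
    also have "\<dots> = (z - c)^2 / (c^2 + 1)" using B D
      by (subst mult_divide_mult_cancel_left) auto
    finally show ?thesis .
  qed
  have cpos: "c > 0"
  proof -
    have "r eps > 0" "r (a1 * eps) > 0" using r_pos eps a1 by auto
    then have "r eps powr t eps > 0" "r (a1 * eps) powr t (a1 * eps) > 0" by auto
    then show ?thesis using strategy a1 by auto
  qed
  have part2: "chi \<le> 1" if h: "z \<le> 1" "Y \<ge> 0"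
  proof -
    have z0: "z \<ge> 0" unfolding zdef using h Xp by simp
    have "z^2 \<le> 1" using z0 h by (simp add: power_le_one)
    then have "(z - c)^2 \<le> c^2 + 1" using z0 cpos
      by (simp add: power2_eq_square algebra_simps) (smt (verit) mult_nonneg_nonneg)
    then have "(z - c)^2 / (c^2 + 1) \<le> 1" by (simp add: add_nonneg_pos)
    then show ?thesis using part1 by linarith
  qed
  show ?thesis using part1 part2 unfolding Y_def by blast
qed

end
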